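(* Let $\mathcal{F}\subseteq\Sigma^*$ be a finite family of strings, $k\ge0$ an integer, and $(N(F))_{F\in\mathcal{F}}$ a $k$-complete family. Then for all $F_1,F_2\in\mathcal{F}$ and all integers $0\le d\le k$, $$\mathsf{LCP}_d(F_1,F_2)=\max_{\substack{d_1+d_2=d\\ F_i'\in N_{d,d_i}(F_i)}}\mathsf{LCP}(F_1',F_2')=\max_{\substack{\lfloor d_1+d_2\rfloor\le d\\ F_i'\in N_{k,d_i}(F_i)}}\mathsf{LCP}(F_1',F_2'),$$ where in the first maximum $d_1,d_2$ range over half-integers in $[0,d]$ and in the second over half-integers in $[0,k]$.
   Context: Let $\$\notin\Sigma$ and $\Sigma_\$=\Sigma\cup\{\$\}$. $d_H$ is the Hamming distance of equal-length strings, $\mathsf{LCP}$ the longest common prefix length, $\mathsf{LCP}_d(U,V)=\max\{p\le\min(|U|,|V|): d_H(U[1..p],V[1..p])\le d\}$, and $\#_\$(W)$ the number of occurrences of $\$$ in $W$. For $U,V\in\Sigma^*$ and $d\ge0$, strings $U',V'\in\Sigma_\$^*$ form a $(U,V)_d$-pair if $|U'|=|U|$, $|V'|=|V|$, and for each position $i$: if $i>\mathsf{LCP}_d(U,V)$ or $U[i]=V[i]$ then $U'[i]=U[i]$ and $V'[i]=V[i]$; otherwise $U'[i]=V'[i]\in\{U[i],V[i],\$\}$. Sets $N(F)\subseteq\Sigma_\$^*$ ($F\in\mathcal{F}$) form a $k$-complete family if for all $U,V\in\mathcal{F}$ and $0\le d\le k$ there is a $(U,V)_d$-pair $(U',V')$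 with $U'\in N(U)$, $V'\in N(V)$. For $F\in\mathcal{F}$ and integer $d\ge 0$, $N_d(F)=\{F'\in N(F): |F'|=|F|,\ d_H(F,F')\le d\}$, and for a half-integer $0\le d'\le d$, $N_{d,d'}(F)=\{F'\in N_d(F): d_H(F,F')-\tfrac12\#_\$(F')\le d'\}$. A half-integer is an element of $\tfrac12\mathbb{Z}$. *)

theory Defs
  imports Complex_Main
begin

text \<open>Strings over \<Sigma> are lists over a type 'a; strings over \<Sigma>_$ are lists over
 'a option, where None plays the role of the fresh symbol $ and Some c the letter c.\<close>

abbreviation lift :: "'a list \<Rightarrow> 'a option list" where
  "lift U \<equiv> map Some U"

definition hamming :: "'b list \<Rightarrow> 'b list \<Rightarrow> nat" where
  "hamming xs ys = card {i. i < length xs \<and> xs ! i \<noteq> ys ! i}"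

definition LCP :: "'b list \<Rightarrow> 'b list \<Rightarrow> nat" where
  "LCP xs ys = Max {p. p \<le> min (length xs) (length ys) \<and> take p xs = take p ys}"

definition LCPd :: "nat \<Rightarrow> 'b list \<Rightarrow> 'b list \<Rightarrow> nat" where
  "LCPd d U V = Max {p. p \<le> min (length U) (length V) \<and> hamming (take p U) (take p V) \<le> d}"

definition dollar_count :: "'a option list \<Rightarrow> nat" where
  "dollar_count W = length (filter (\<lambda>c. c = None) W)"

definition half_integers :: "real set" where
  "half_integers = {x. \<exists>z::int. x = real_of_int z / 2}"

text \<open>(U,V)_d-pair; positions are 0-indexed here (position i+1 of the paper).\<close>
definition is_pair :: "nat \<Rightarrow> 'a list \<Rightarrow> 'a list \<Rightarrow> 'a option list \<Rightarrow> 'a option list \<Rightarrow> bool" where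
  "is_pair d U V U' V' \<longleftrightarrow>
     length U' = length U \<and> length V' = length V \<and>
     (\<forall>i < length U. (i \<ge> LCPd d U V \<or> U ! i = V ! i) \<longrightarrow> U' ! i = Some (U ! i)) \<and>
     (\<forall>i < length V. (i \<ge> LCPd d U V \<or> U ! i = V ! i) \<longrightarrow> V' ! i = Some (V ! i)) \<and>
     (\<forall>i < LCPd d U V. U ! i \<noteq> V ! i \<longrightarrow>
         U' ! i = V' ! i \<and> U' ! i \<in> {Some (U ! i), Some (V ! i), None})"

definition k_complete :: "nat \<Rightarrow> 'a list set \<Rightarrow> ('a list \<Rightarrow> 'a option list set) \<Rightarrow> bool" where
  "k_complete k \<F> N \<longleftrightarrow>
     (\<forall>U\<in>\<F>. \<forall>V\<in>\<F>. \<forall>d\<le>k. \<exists>U' V'. is_pair d U V U' V' \<and> U' \<in> N U \<and> V' \<in> N V)"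

definition Nd :: "('a list \<Rightarrow> 'a option list set) \<Rightarrow> nat \<Rightarrow> 'a list \<Rightarrow> 'a option list set" where
  "Nd N d F = {F' \<in> N F. length F' = length F \<and> hamming (lift F) F' \<le> d}"

definition Ndd :: "('a list \<Rightarrow> 'a option list set) \<Rightarrow> nat \<Rightarrow> real \<Rightarrow> 'a list \<Rightarrow> 'a option list set" where
  "Ndd N d d' F = {F' \<in> Nd N d F. real (hamming (lift F) F') - real (dollar_count F') / 2 \<le> d'}"

end

theory Submission
  imports Defs
begin

lemma card_sum_ind: "real (card {i. i < (n::nat) \<and> P i}) = (\<Sum>i<n. if P i then 1 else 0)"
proof -
  have "{i. i < n \<and> P i} = {..<n} \<inter> Collect P" by auto
  moreover have "real (card ({..<n} \<inter> Collect P)) = (\<Sum>i\<in>{..<n} \<inter> Collect P. 1)" by simp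
  moreover have "(\<Sum>i\<in>{..<n} \<inter> Collect P. (1::real)) = (\<Sum>i<n. if P i then 1 else 0)"
    by (subst sum.inter_restrict) auto
  ultimately show ?thesis by simp
qed

definition w :: "'a list \<Rightarrow> 'a option list \<Rightarrow> nat \<Rightarrow> real" where
  "w F F' i = (if F' ! i \<noteq> Some (F ! i) then 1 else 0) - (if F' ! i = None then 1/2 else 0)"

lemma w_nonneg: "0 \<le> w F F' i" unfolding w_def by auto

lemma hamming_lift: "length F' = length F \<Longrightarrow> hamming (lift F) F' = card {i. i < length F \<and> F' ! i \<noteq> Some (F ! i)}"
  unfolding hamming_def by (auto intro!: arg_cong[where f=card])

lemma dollar_card: "dollar_count W = card {i. i < length W \<and> W ! i = None}"
  unfolding dollar_count_def by (simp add: length_filter_conv_card)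

lemma cost_sum: assumes "length F' = length F"
  shows "real (hamming (lift F) F') - real (dollar_count F') / 2 = (\<Sum>i<length F. w F F' i)"
proof -
  have "(\<Sum>i<length F. w F F' i) = (\<Sum>i<length F. if F' ! i \<noteq> Some (F ! i) then 1 else 0) - (\<Sum>i<length F. if F' ! i = None then 1 else 0) / 2"
    unfolding w_def by (simp add: sum_divide_distrib sum_subtractf[symmetric]; intro sum.cong; auto)
  also have "\<dots> = real (hamming (lift F) F') - real (dollar_count F') / 2"
    using assms by (simp add: hamming_lift dollar_card card_sum_ind)
  finally show ?thesis by simp
qed

lemma cost_half: "real (hamming (lift F) F') - real (dollar_count F') / 2 \<in> half_integers"
  unfolding half_integers_def
  by (rule CollectI, rule exI[of _ "2 * int (hamming (lift F) F') - int (dollar_count F')"]) simp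

lemma hamming_take: assumes "p \<le> length U" "p \<le> length V"
  shows "hamming (take p U) (take p V) = card {i. i < p \<and> U ! i \<noteq> V ! i}"
  unfolding hamming_def using assms by (auto intro!: arg_cong[where f=card])

lemma LCP_props: "LCP xs ys \<le> min (length xs) (length ys) \<and> take (LCP xs ys) xs = take (LCP xs ys) ys"
proof -
  let ?S = "{p. p \<le> min (length xs) (length ys) \<and> take p xs = take p ys}"
  have f: "finite ?S" by (rule finite_subset[of _ "{..min (length xs) (length ys)}"]) auto
  have "0 \<in> ?S" by simp
  then have "LCP xs ys \<in> ?S" unfolding LCP_def using f Max_in by blast
  then show ?thesis by simp
qed

lemma LCP_ge: "p \<le> min (length xs) (length ys) \<Longrightarrow> take p xs = take p ys \<Longrightarrow> p \<le> LCP xs ys"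
proof -
  assume a: "p \<le> min (length xs) (length ys)" "take p xs = take p ys"
  let ?S = "{p. p \<le> min (length xs) (length ys) \<and> take p xs = take p ys}"
  have f: "finite ?S" by (rule finite_subset[of _ "{..min (length xs) (length ys)}"]) auto
  show ?thesis unfolding LCP_def using a f by (intro Max_ge) auto
qed

lemma LCPd_props: "LCPd d U V \<le> min (length U) (length V) \<and> hamming (take (LCPd d U V) U) (take (LCPd d U V) V) \<le> d"
proof -
  let ?S = "{p. p \<le> min (length U) (length V) \<and> hamming (take p U) (take p V) \<le> d}"
  have f: "finite ?S" by (rule finite_subset[of _ "{..min (length U) (length V)}"]) auto
  have "0 \<in> ?S" by (simp add: hamming_def)
  then have "LCPd d U V \<in> ?S" unfolding LCPd_def using f Max_in by blast
  then show ?thesis by simp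
qed

lemma LCPd_ge: "p \<le> min (length U) (length V) \<Longrightarrow> hamming (take p U) (take p V) \<le> d \<Longrightarrow> p \<le> LCPd d U V"
proof -
  assume a: "p \<le> min (length U) (length V)" "hamming (take p U) (take p V) \<le> d"
  let ?S = "{p. p \<le> min (length U) (length V) \<and> hamming (take p U) (take p V) \<le> d}"
  have f: "finite ?S" by (rule finite_subset[of _ "{..min (length U) (length V)}"]) auto
  show ?thesis unfolding LCPd_def using a f by (intro Max_ge) auto
qed

lemma upper:
  assumes l1: "length F1' = length F1" and l2: "length F2' = length F2"
  shows "real (hamming (take (LCP F1' F2') F1) (take (LCP F1' F2') F2))
     \<le> (\<Sum>i<length F1. w F1 F1' i) + (\<Sum>i<length F2. w F2 F2' i)"
proof -
  define p where "p = LCP F1' F2'"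
  have pl: "p \<le> length F1" "p \<le> length F2" and tk: "take p F1' = take p F2'"
    using LCP_props[of F1' F2'] l1 l2 unfolding p_def by auto
  have eq: "F1' ! i = F2' ! i" if "i < p" for i
    using tk that by (metis nth_take)
  have "real (hamming (take p F1) (take p F2)) = (\<Sum>i<p. if F1 ! i \<noteq> F2 ! i then 1 else 0)"
    using pl by (simp add: hamming_take card_sum_ind)
  also have "\<dots> \<le> (\<Sum>i<p. w F1 F1' i + w F2 F2' i)"
  proof (rule sum_mono)
    fix i assume "i \<in> {..<p}"
    then have e: "F1' ! i = F2' ! i" using eq by auto
    show "(if F1 ! i \<noteq> F2 ! i then 1 else 0) \<le> w F1 F1' i + w F2 F2' i"
      using w_nonneg[of F1 F1' i] w_nonneg[of F2 F2' i] e
      unfolding w_def by (cases "F1' ! i") auto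
  qed
  also have "\<dots> = (\<Sum>i<p. w F1 F1' i) + (\<Sum>i<p. w F2 F2' i)" by (simp add: sum.distrib)
  also have "\<dots> \<le> (\<Sum>i<length F1. w F1 F1' i) + (\<Sum>i<length F2. w F2 F2' i)"
    using pl by (intro add_mono sum_mono2) (auto simp: w_nonneg)
  finally show ?thesis unfolding p_def .
qed

lemma lower:
  assumes P: "is_pair d U V U' V'"
  defines "L \<equiv> LCPd d U V"
  shows "L \<le> LCP U' V'"
    and "(\<Sum>i<length U. w U U' i) + (\<Sum>i<length V. w V V' i) \<le> real (hamming (take L U) (take L V))"
    and "hamming (lift U) U' \<le> hamming (take L U) (take L V)"
    and "hamming (lift V) V' \<le> hamming (take L U) (take L V)"
proof -
  have lens: "length U' = length U" "length V' = length V"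
    and outU: "\<And>i. i < length U \<Longrightarrow> (i \<ge> L \<or> U ! i = V ! i) \<Longrightarrow> U' ! i = Some (U ! i)"
    and outV: "\<And>i. i < length V \<Longrightarrow> (i \<ge> L \<or> U ! i = V ! i) \<Longrightarrow> V' ! i = Some (V ! i)"
    and mis: "\<And>i. i < L \<Longrightarrow> U ! i \<noteq> V ! i \<Longrightarrow> U' ! i = V' ! i \<and> U' ! i \<in> {Some (U ! i), Some (V ! i), None}"
    using P unfolding is_pair_def L_def by blast+
  have Ll: "L \<le> length U" "L \<le> length V" using LCPd_props[of d U V] unfolding L_def by auto
  have eq: "U' ! i = V' ! i" if "i < L" for i
    using that Ll outU outV mis by (cases "U ! i = V ! i") auto
  show "L \<le> LCP U' V'"
    using Ll lens eq by (intro LCP_ge) (auto intro!: nth_equalityI)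
  have s1: "(\<Sum>i<length U. w U U' i) = (\<Sum>i<L. w U U' i)"
    using Ll outU by (intro sum.mono_neutral_right) (auto simp: w_def)
  have s2: "(\<Sum>i<length V. w V V' i) = (\<Sum>i<L. w V V' i)"
    using Ll outV by (intro sum.mono_neutral_right) (auto simp: w_def)
  have "(\<Sum>i<L. w U U' i) + (\<Sum>i<L. w V V' i) = (\<Sum>i<L. w U U' i + w V V' i)" by (simp add: sum.distrib)
  also have "\<dots> \<le> (\<Sum>i<L. if U ! i \<noteq> V ! i then 1 else 0)"
  proof (rule sum_mono)
    fix i assume i: "i \<in> {..<L}"
    show "w U U' i + w V V' i \<le> (if U ! i \<noteq> V ! i then 1 else 0)"
    proof (cases "U ! i = V ! i")
      case True then show ?thesis using i Ll outU outV by (auto simp: w_def)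
    next
      case False then show ?thesis using i mis[of i] by (auto simp: w_def)
    qed
  qed
  also have "\<dots> = real (hamming (take L U) (take L V))"
    using Ll by (simp add: hamming_take card_sum_ind)
  finally show "(\<Sum>i<length U. w U U' i) + (\<Sum>i<length V. w V V' i) \<le> real (hamming (take L U) (take L V))"
    using s1 s2 by simp
  show "hamming (lift U) U' \<le> hamming (take L U) (take L V)"
    unfolding hamming_lift[OF lens(1)] hamming_take[OF Ll]
    using outU Ll by (intro card_mono) (auto, metis not_le)
  show "hamming (lift V) V' \<le> hamming (take L U) (take L V)"
    unfolding hamming_lift[OF lens(2)] hamming_take[OF Ll]
    using outV Ll by (intro card_mono) (auto, metis not_le)
qed

lemma upper2:
  assumes "F1' \<in> Ndd N D d1 F1" "F2' \<in> Ndd N D d2 F2"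
    and "\<And>h::nat. real h \<le> d1 + d2 \<Longrightarrow> h \<le> d"
  shows "LCP F1' F2' \<le> LCPd d F1 F2"
proof -
  have l: "length F1' = length F1" "length F2' = length F2"
    and c: "real (hamming (lift F1) F1') - real (dollar_count F1') / 2 \<le> d1"
           "real (hamming (lift F2) F2') - real (dollar_count F2') / 2 \<le> d2"
    using assms(1,2) unfolding Ndd_def Nd_def by auto
  have "real (hamming (take (LCP F1' F2') F1) (take (LCP F1' F2') F2)) \<le> d1 + d2"
    using upper[OF l] c cost_sum[OF l(1)] cost_sum[OF l(2)] by linarith
  then have "hamming (take (LCP F1' F2') F1) (take (LCP F1' F2') F2) \<le> d" by (rule assms(3))
  moreover have "LCP F1' F2' \<le> min (length F1) (length F2)" using LCP_props[of F1' F2'] l by simp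
  ultimately show ?thesis by (intro LCPd_ge) auto
qed

theorem lemma9:
  fixes \<F> :: "'a list set" and N :: "'a list \<Rightarrow> 'a option list set" and k :: nat
  assumes "finite \<F>" and "k_complete k \<F> N"
  shows "\<forall>F1\<in>\<F>. \<forall>F2\<in>\<F>. \<forall>d::nat. d \<le> k \<longrightarrow>
    LCPd d F1 F2 =
      Max {LCP F1' F2' | d1 d2 F1' F2'.
             d1 \<in> half_integers \<and> d2 \<in> half_integers \<and>
             0 \<le> d1 \<and> d1 \<le> real d \<and> 0 \<le> d2 \<and> d2 \<le> real d \<and> d1 + d2 = real d \<and>
             F1' \<in> Ndd N d d1 F1 \<and> F2' \<in> Ndd N d d2 F2}
    \<and> LCPd d F1 F2 =
      Max {LCP F1' F2' | d1 d2 F1' F2'.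
             d1 \<in> half_integers \<and> d2 \<in> half_integers \<and>
             0 \<le> d1 \<and> d1 \<le> real k \<and> 0 \<le> d2 \<and> d2 \<le> real k \<and>
             \<lfloor>d1 + d2\<rfloor> \<le> int d \<and>
             F1' \<in> Ndd N k d1 F1 \<and> F2' \<in> Ndd N k d2 F2}"
proof (intro ballI allI impI)
  fix F1 F2 d assume F: "F1 \<in> \<F>" "F2 \<in> \<F>" and dk: "(d::nat) \<le> k"
  define L where "L = LCPd d F1 F2"
  obtain U' V' where P: "is_pair d F1 F2 U' V'" and UN: "U' \<in> N F1" and VN: "V' \<in> N F2"
    using assms(2) F dk unfolding k_complete_def by blast
  have lens: "length U' = length F1" "length V' = length F2" using P unfolding is_pair_def by auto
  define c1 where "c1 = real (hamming (lift F1) U') - real (dollar_count U') / 2"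
  define c2 where "c2 = real (hamming (lift F2) V') - real (dollar_count V') / 2"
  have c1s: "c1 = (\<Sum>i<length F1. w F1 U' i)" unfolding c1_def by (rule cost_sum[OF lens(1)])
  have c2s: "c2 = (\<Sum>i<length F2. w F2 V' i)" unfolding c2_def by (rule cost_sum[OF lens(2)])
  have c1p: "0 \<le> c1" "0 \<le> c2" unfolding c1s c2s by (auto intro!: sum_nonneg simp: w_nonneg)
  have m: "hamming (take L F1) (take L F2) \<le> d" using LCPd_props[of d F1 F2] unfolding L_def by auto
  note lw = lower[OF P, folded L_def]
  have csum: "c1 + c2 \<le> real d" using lw(2) m c1s c2s
    by (smt (verit, best) of_nat_le_iff)
  have h1: "hamming (lift F1) U' \<le> d" "hamming (lift F2) V' \<le> d" using lw(3,4) m by auto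
  have hi1: "real d - c2 \<in> half_integers" and hi2: "c2 \<in> half_integers"
  proof -
    show "c2 \<in> half_integers" unfolding c2_def by (rule cost_half)
    then obtain z where "c2 = real_of_int z / 2" unfolding half_integers_def by auto
    then show "real d - c2 \<in> half_integers" unfolding half_integers_def
      by (intro CollectI exI[of _ "2 * int d - z"]) simp
  qed
  let ?S1 = "{LCP F1' F2' | d1 d2 F1' F2'.
             d1 \<in> half_integers \<and> d2 \<in> half_integers \<and>
             0 \<le> d1 \<and> d1 \<le> real d \<and> 0 \<le> d2 \<and> d2 \<le> real d \<and> d1 + d2 = real d \<and>
             F1' \<in> Ndd N d d1 F1 \<and> F2' \<in> Ndd N d d2 F2}"
  let ?S2 = "{LCP F1' F2' | d1 d2 F1' F2'.
             d1 \<in> half_integers \<and> d2 \<in> half_integers \<and>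
             0 \<le> d1 \<and> d1 \<le> real k \<and> 0 \<le> d2 \<and> d2 \<le> real k \<and>
             \<lfloor>d1 + d2\<rfloor> \<le> int d \<and>
             F1' \<in> Ndd N k d1 F1 \<and> F2' \<in> Ndd N k d2 F2}"
  have ub1: "y \<le> L" if "y \<in> ?S1" for y
    using that unfolding L_def by (auto intro!: upper2)
  have ub2: "y \<le> L" if "y \<in> ?S2" for y
  proof -
    from that obtain d1 d2 F1' F2' where y: "y = LCP F1' F2'" and fl: "\<lfloor>d1 + d2\<rfloor> \<le> int d"
      and m1: "F1' \<in> Ndd N k d1 F1" and m2: "F2' \<in> Ndd N k d2 F2" by blast
    have "h \<le> d" if "real h \<le> d1 + d2" for h :: nat
    proof -
      have "int h \<le> \<lfloor>d1 + d2\<rfloor>" using that by (simp add: le_floor_iff)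
      then show ?thesis using fl by simp
    qed
    then show ?thesis unfolding y L_def by (rule upper2[OF m1 m2])
  qed
  have in1: "U' \<in> Ndd N d (real d - c2) F1" "V' \<in> Ndd N d c2 F2"
    using UN VN lens h1 csum unfolding Ndd_def Nd_def by (auto simp: c1_def c2_def)
  have in2: "U' \<in> Ndd N k (real d - c2) F1" "V' \<in> Ndd N k c2 F2"
    using UN VN lens h1 csum dk unfolding Ndd_def Nd_def by (auto simp: c1_def c2_def)
  have LU: "L \<le> LCP U' V'" by (rule lw(1))
  have mem1: "LCP U' V' \<in> ?S1"
    using in1 hi1 hi2 c1p csum by (intro CollectI exI[of _ "real d - c2"] exI[of _ c2] exI[of _ U'] exI[of _ V']) auto
  have mem2: "LCP U' V' \<in> ?S2"
  proof -
    have "\<lfloor>real d - c2 + c2\<rfloor> \<le> int d" by simp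
    then show ?thesis
      using in2 hi1 hi2 c1p csum dk by (intro CollectI exI[of _ "real d - c2"] exI[of _ c2] exI[of _ U'] exI[of _ V']) auto
  qed
  have e1: "LCP U' V' = L" using ub1[OF mem1] LU by simp
  have f1: "finite ?S1" by (rule finite_subset[of _ "{..L}"]) (use ub1 in blast, simp)
  have f2: "finite ?S2" by (rule finite_subset[of _ "{..L}"]) (use ub2 in blast, simp)
  have "Max ?S1 = L"
    using ub1 mem1 e1 f1 by (intro Max_eqI) auto
  moreover have "Max ?S2 = L"
    using ub2 mem2 e1 f2 by (intro Max_eqI) auto
  ultimately show "LCPd d F1 F2 = Max ?S1 \<and> LCPd d F1 F2 = Max ?S2" unfolding L_def by simp
qed

end
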